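(* Let $p\ge 2$ and $d\in\{0,\dots,9\}$ be integers. The sequence $\big(P_{(d,10^n-1,p)}\big)_{n\ge p}$ converges, as $n\to\infty$, to $$\frac{1}{10}+\frac{n_{(d,p)}+m_{(d,p)}-9l_{(d,p)}-d\,k_{(d,p)}}{9\times10^{p-1}}+\frac{1}{90}\ln\Big(\frac{10^{p-1}+d}{10^{p-1}}\Big)+\frac{1}{9}\ln\Big(\frac{10^{p}}{10^{p}-10+d+1}\Big),$$ where $k_{(d,p)}=\sum_{j=10^{p-2}}^{10^{p-1}-1}\ln\frac{10j+d+1}{10j+d}$, $l_{(d,p)}=\sum_{j=10^{p-2}}^{10^{p-1}-1}j\ln\frac{10j+d+1}{10j+d}$, $m_{(d,p)}=\sum_{j=10^{p-2}}^{10^{p-1}-2}\ln\frac{10(j+1)+d}{10j+d+1}$, and $n_{(d,p)}=\sum_{j=10^{p-2}}^{10^{p-1}-2}j\ln\frac{10(j+1)+d}{10j+d+1}$.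
   Context: For an integer $x\ge 10^{p-1}$, the "$p$-th digit of $x$" is the $p$-th digit of its decimal expansion counted from the left. For integers $p\ge2$, $d\in\{0,\dots,9\}$ and $m\ge 10^{p-1}$, let $N_d(m)$ be the number of integers $x$ with $10^{p-1}\le x\le m$ whose $p$-th digit is $d$. For $N\ge 10^{p-1}$, $$P_{(d,N,p)}=\frac{1}{N+1-10^{p-1}}\sum_{m=10^{p-1}}^{N}\frac{N_d(m)}{m+1-10^{p-1}},$$ which is the probability that the $p$-th digit of $x$ is $d$ when $m$ is chosen uniformly in $\{10^{p-1},\dots,N\}$ and then $x$ uniformly in $\{10^{p-1},\dots,m\}$. Here $\ln$ is the natural logarithm. *)

theory Defs
  imports Complex_Main
begin

definition num_digits :: "nat \<Rightarrow> nat" where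
  "num_digits x = (LEAST k. x < 10 ^ k)"

text \<open>The p-th decimal digit of x counted from the left (p \<ge> 1),
  meaningful for x \<ge> 10^(p-1).\<close>
definition pth_digit :: "nat \<Rightarrow> nat \<Rightarrow> nat" where
  "pth_digit p x = (x div 10 ^ (num_digits x - p)) mod 10"

definition Ncount :: "nat \<Rightarrow> nat \<Rightarrow> nat \<Rightarrow> nat" where
  "Ncount p d m = card {x. 10 ^ (p - 1) \<le> x \<and> x \<le> m \<and> pth_digit p x = d}"

definition Pprob :: "nat \<Rightarrow> nat \<Rightarrow> nat \<Rightarrow> real" where
  "Pprob d N p = (1 / (real N + 1 - 10 ^ (p - 1))) *
     (\<Sum>m = 10 ^ (p - 1)..N. real (Ncount p d m) / (real m + 1 - 10 ^ (p - 1)))"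

definition kdp :: "nat \<Rightarrow> nat \<Rightarrow> real" where
  "kdp d p = (\<Sum>j = 10 ^ (p - 2)..10 ^ (p - 1) - 1.
      ln ((10 * real j + real d + 1) / (10 * real j + real d)))"

definition ldp :: "nat \<Rightarrow> nat \<Rightarrow> real" where
  "ldp d p = (\<Sum>j = 10 ^ (p - 2)..10 ^ (p - 1) - 1.
      real j * ln ((10 * real j + real d + 1) / (10 * real j + real d)))"

definition mdp :: "nat \<Rightarrow> nat \<Rightarrow> real" where
  "mdp d p = (\<Sum>j = 10 ^ (p - 2)..10 ^ (p - 1) - 2.
      ln ((10 * (real j + 1) + real d) / (10 * real j + real d + 1)))"

definition ndp :: "nat \<Rightarrow> nat \<Rightarrow> real" where
  "ndp d p = (\<Sum>j = 10 ^ (p - 2)..10 ^ (p - 1) - 2.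
      real j * ln ((10 * (real j + 1) + real d) / (10 * real j + real d + 1)))"

end

theory Submission
  imports Defs
begin


declare sum_of_bool_eq[simp del]

lemma num_digits_eq:
  assumes "10 ^ (k - 1) \<le> x" "x < 10 ^ k" "k \<ge> 1"
  shows "num_digits x = k"
  unfolding num_digits_def
proof (rule Least_equality)
  show "x < 10 ^ k" by fact
  fix j assume "x < 10 ^ j"
  show "k \<le> j"
  proof (rule ccontr)
    assume "\<not> k \<le> j"
    then have "j \<le> k - 1" by simp
    then have "(10::nat) ^ j \<le> 10 ^ (k - 1)" by (rule power_increasing) simp
    with assms(1) \<open>x < 10 ^ j\<close> show False by linarith
  qed
qed

lemma pth_digit_block:
  assumes "p \<ge> 1" "10 ^ (p - 1) * 10 ^ i \<le> x" "x < 10 ^ p * 10 ^ i"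
  shows "pth_digit p x = (x div 10 ^ i) mod 10"
proof -
  have "num_digits x = p + i"
    using assms by (intro num_digits_eq) (auto simp: power_add[symmetric])
  then show ?thesis unfolding pth_digit_def by simp
qed

lemma sum_blocks:
  fixes a b T :: nat and f :: "nat \<Rightarrow> 'a::comm_monoid_add"
  assumes "a \<le> b"
  shows "(\<Sum>m\<in>{a*T..<b*T}. f m) = (\<Sum>q\<in>{a..<b}. \<Sum>r<T. f (q*T + r))"
  using assms
proof (induction b)
  case 0
  then show ?case by simp
next
  case (Suc b)
  show ?case
  proof (cases "a = Suc b")
    case True
    then show ?thesis by simp
  next
    case False
    then have ab: "a \<le> b" using Suc.prems by simp
    have "(\<Sum>m\<in>{a*T..<Suc b*T}. f m) = (\<Sum>m\<in>{a*T..<b*T}. f m) + (\<Sum>m\<in>{b*T..<b*T+T}. f m)"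
      using ab by (simp add: sum.atLeastLessThan_concat add.commute)
    also have "(\<Sum>m\<in>{b*T..<b*T+T}. f m) = (\<Sum>r<T. f (b*T + r))"
      by (simp add: sum.atLeastLessThan_shift_0 add.commute atLeast0LessThan)
    finally show ?thesis using Suc.IH[OF ab] ab by simp
  qed
qed

lemma Ncount_sum_aux:
  "real (Ncount p d m) = (\<Sum>x\<in>{10^(p-1)..m}. of_bool (pth_digit p x = d))"
proof -
  have "{x. 10 ^ (p - 1) \<le> x \<and> x \<le> m \<and> pth_digit p x = d} = {10^(p-1)..m} \<inter> {x. pth_digit p x = d}"
    by auto
  then show ?thesis unfolding Ncount_def by (simp add: sum_of_bool_eq)
qed

lemma cnt_formula:
  fixes a q d :: nat
  assumes "10*a \<le> q" "d \<le> 9"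
  shows "(\<Sum>q'\<in>{10*a..<q}. of_bool (q' mod 10 = d) :: real)
           = real (q div 10 - a) + of_bool (d < q mod 10)"
  using assms(1)
proof (induction q)
  case 0
  then show ?case by simp
next
  case (Suc q)
  show ?case
  proof (cases "10*a = Suc q")
    case True
    then have "Suc q div 10 = a" "Suc q mod 10 = 0" by (metis div_mult_self1_is_m zero_less_numeral mult.commute, metis mod_mult_self1_is_0 mult.commute)
    then show ?thesis using True by simp
  next
    case False
    then have h: "10*a \<le> q" using Suc.prems by simp
    have "(\<Sum>q'\<in>{10*a..<Suc q}. of_bool (q' mod 10 = d) :: real)
       = (\<Sum>q'\<in>{10*a..<q}. of_bool (q' mod 10 = d)) + of_bool (q mod 10 = d)"
      using h by simp
    also have "\<dots> = real (q div 10 - a) + of_bool (d < q mod 10) + of_bool (q mod 10 = d)"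
      using Suc.IH[OF h] by simp
    also have "\<dots> = real (Suc q div 10 - a) + of_bool (d < Suc q mod 10)"
    proof (cases "q mod 10 = 9")
      case True
      then have "Suc q div 10 = q div 10 + 1" "Suc q mod 10 = 0" by (simp_all add: mod_Suc div_Suc)
      moreover have "q div 10 \<ge> a" using h by auto
      ultimately show ?thesis using True assms(2) by (auto simp: of_nat_diff)
    next
      case False
      then have "Suc q div 10 = q div 10" "Suc q mod 10 = q mod 10 + 1" by (simp_all add: mod_Suc div_Suc)
      then show ?thesis using False assms(2) by auto
    qed
    finally show ?thesis .
  qed
qed

lemma digit_block2:
  fixes p q r i :: nat
  assumes "p \<ge> 1" "10^(p-1) \<le> q" "q < 10^p" "r < 10^i"
  shows "pth_digit p (q * 10^i + r) = q mod 10"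
proof -
  have "10 ^ (p - 1) * 10 ^ i \<le> q * 10^i + r"
    using assms by (simp add: trans_le_add1)
  moreover have "q * 10^i + r < 10 ^ p * 10 ^ i"
  proof -
    have "q * 10^i + r < (q+1) * 10^i" using assms by simp
    also have "\<dots> \<le> 10^p * 10^i" using assms by (intro mult_right_mono) auto
    finally show ?thesis .
  qed
  ultimately have "pth_digit p (q * 10^i + r) = ((q * 10^i + r) div 10^i) mod 10"
    using assms by (intro pth_digit_block) auto
  also have "(q * 10^i + r) div 10^i = q" using assms by simp
  finally show ?thesis .
qed

lemma pow_split:
  assumes "p \<ge> 2"
  shows "(10::'a::comm_semiring_1)^(p-1) = 10 * 10^(p-2)" "(10::'a)^p = 10 * 10^(p-1)"
proof -
  obtain k where "p = k + 2" using assms le_Suc_ex by (metis add.commute)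
  then show "(10::'a)^(p-1) = 10 * 10^(p-2)" "(10::'a)^p = 10 * 10^(p-1)" by simp_all
qed

lemma block_digit_sum:
  fixes p d i :: nat
  assumes "p \<ge> 2" "d \<le> 9"
  shows "(\<Sum>x\<in>{10^(p-1)*10^i..<10^p*10^i}. of_bool (pth_digit p x = d) :: real)
          = 10^i * (9 * 10^(p-2))"
proof -
  have L: "(10::nat)^(p-1) = 10 * 10^(p-2)" "(10::nat)^p = 10 * 10^(p-1)"
    "(10::real)^(p-1) = 10 * 10^(p-2)"
    using pow_split[OF assms(1)] by auto
  have "(\<Sum>x\<in>{10^(p-1)*10^i..<10^p*10^i}. of_bool (pth_digit p x = d) :: real)
      = (\<Sum>q\<in>{10^(p-1)..<10^p}. \<Sum>r<10^i. of_bool (pth_digit p (q*10^i + r) = d))"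
    by (rule sum_blocks) simp
  also have "\<dots> = (\<Sum>q\<in>{10^(p-1)..<10^p}. \<Sum>r<(10::nat)^i. of_bool (q mod 10 = d))"
    using assms by (intro sum.cong refl) (simp add: digit_block2)
  also have "\<dots> = 10^i * (\<Sum>q\<in>{10*10^(p-2)..<10*10^(p-1)}. of_bool (q mod 10 = d))"
    using L by (simp add: sum_distrib_left)
  also have "(\<Sum>q\<in>{10*10^(p-2)..<10*10^(p-1)}. of_bool (q mod 10 = d) :: real) = 9 * 10^(p-2)"
    using cnt_formula[of "10^(p-2)" "10*10^(p-1)" d] assms L by (simp add: of_nat_diff)
  finally show ?thesis .
qed

lemma prefix_count:
  fixes p d i :: nat
  assumes "p \<ge> 2" "d \<le> 9"
  shows "(\<Sum>x\<in>{10^(p-1)..<10^(p-1)*10^i}. of_bool (pth_digit p x = d) :: real)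
          = 10^(p-2) * 10^i - 10^(p-2)"
proof (induction i)
  case 0
  then show ?case by simp
next
  case (Suc i)
  have L: "(10::nat)^p = 10 * 10^(p-1)" "(10::real)^(p-1) = 10 * 10^(p-2)"
    using pow_split[OF assms(1)] by auto
  have le1: "(10::nat)^(p-1) \<le> 10^(p-1)*10^i" by simp
  have le2: "(10::nat)^(p-1)*10^i \<le> 10^(p-1)*10^Suc i" by simp
  have e: "(10::nat)^(p-1)*10^Suc i = 10^p*10^i" using L by simp
  have "(\<Sum>x\<in>{10^(p-1)..<10^(p-1)*10^Suc i}. of_bool (pth_digit p x = d) :: real)
     = (\<Sum>x\<in>{10^(p-1)..<10^(p-1)*10^i}. of_bool (pth_digit p x = d))
       + (\<Sum>x\<in>{10^(p-1)*10^i..<10^p*10^i}. of_bool (pth_digit p x = d))"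
    unfolding e[symmetric] by (rule sum.atLeastLessThan_concat[OF le1 le2, symmetric])
  also have "\<dots> = 10^(p-2) * 10^i - 10^(p-2) + 10^i * (9 * 10^(p-2))"
    using Suc.IH block_digit_sum[OF assms] by simp
  also have "\<dots> = 10^(p-2) * 10^Suc i - 10^(p-2)" by simp
  finally show ?case .
qed

lemma Ncount_block:
  fixes p d i q r :: nat
  assumes "p \<ge> 2" "d \<le> 9" "10^(p-1) \<le> q" "q < 10^p" "r < 10^i"
  shows "real (Ncount p d (q*10^i + r)) = (10^(p-2)*10^i - 10^(p-2))
     + 10^i * (real (q div 10 - 10^(p-2)) + of_bool (d < q mod 10))
     + of_bool (q mod 10 = d) * (real r + 1)"
proof -
  let ?g = "\<lambda>x. of_bool (pth_digit p x = d) :: real"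
  have L: "(10::nat)^(p-1) = 10 * 10^(p-2)" using pow_split[OF assms(1)] by auto
  have le1: "(10::nat)^(p-1) \<le> 10^(p-1)*10^i" by simp
  have le2: "(10::nat)^(p-1)*10^i \<le> q*10^i" using assms by simp
  have le3: "q*10^i \<le> q*10^i + Suc r" by simp
  have "real (Ncount p d (q*10^i + r)) = (\<Sum>x\<in>{10^(p-1)..<q*10^i + Suc r}. ?g x)"
    unfolding Ncount_sum_aux by (rule sum.cong) auto
  also have "\<dots> = (\<Sum>x\<in>{10^(p-1)..<10^(p-1)*10^i}. ?g x) + (\<Sum>x\<in>{10^(p-1)*10^i..<q*10^i}. ?g x)
     + (\<Sum>x\<in>{q*10^i..<q*10^i + Suc r}. ?g x)"
    by (simp only: sum.atLeastLessThan_concat[OF le1 le2] sum.atLeastLessThan_concat[OF order.trans[OF le1 le2] le3])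
  also have "(\<Sum>x\<in>{10^(p-1)..<10^(p-1)*10^i}. ?g x) = 10^(p-2)*10^i - 10^(p-2)"
    by (rule prefix_count[OF assms(1,2)])
  also have "(\<Sum>x\<in>{10^(p-1)*10^i..<q*10^i}. ?g x) = (\<Sum>q'\<in>{10^(p-1)..<q}. \<Sum>r'<10^i. ?g (q'*10^i + r'))"
    using assms by (intro sum_blocks) simp
  also have "\<dots> = (\<Sum>q'\<in>{10^(p-1)..<q}. \<Sum>r'<(10::nat)^i. of_bool (q' mod 10 = d))"
    using assms by (intro sum.cong refl) (simp add: digit_block2)
  also have "\<dots> = 10^i * (\<Sum>q'\<in>{10*10^(p-2)..<q}. of_bool (q' mod 10 = d))"
    using L by (simp add: sum_distrib_left)
  also have "(\<Sum>q'\<in>{10*10^(p-2)..<q}. of_bool (q' mod 10 = d) :: real)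
      = real (q div 10 - 10^(p-2)) + of_bool (d < q mod 10)"
    using assms L by (intro cnt_formula) auto
  also have "(\<Sum>x\<in>{q*10^i..<q*10^i + Suc r}. ?g x) = (\<Sum>r'<Suc r. ?g (q*10^i + r'))"
    by (simp add: sum.atLeastLessThan_shift_0 add.commute atLeast0LessThan)
  also have "\<dots> = (\<Sum>r'<Suc r. of_bool (q mod 10 = d))"
    using assms by (intro sum.cong refl) (simp add: digit_block2)
  also have "\<dots> = of_bool (q mod 10 = d) * (real r + 1)" by simp
  finally show ?thesis .
qed



lemma ln_step_upper:
  fixes x :: real assumes "x > 0"
  shows "ln (x + 1) - ln x \<le> 1 / x"
proof -
  have "ln ((x+1)/x) \<le> (x+1)/x - 1" using assms by (intro ln_le_minus_one) auto
  also have "(x+1)/x - 1 = 1/x" using assms by (simp add: field_simps)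
  finally show ?thesis using assms by (simp add: ln_div)
qed

lemma ln_step_lower:
  fixes x :: real assumes "x > 1"
  shows "1 / x \<le> ln x - ln (x - 1)"
proof -
  have "ln ((x-1)/x) \<le> (x-1)/x - 1" using assms by (intro ln_le_minus_one) auto
  also have "(x-1)/x - 1 = - (1/x)" using assms by (simp add: field_simps)
  finally show ?thesis using assms by (simp add: ln_div)
qed

lemma harm_lower:
  fixes b :: real assumes "b > 0"
  shows "ln ((b + T) / b) \<le> (\<Sum>r<T. 1 / (b + real r))"
proof -
  have "ln ((b + T) / b) = (\<Sum>r<T. ln (b + real (Suc r)) - ln (b + real r))"
    using assms by (subst sum_lessThan_telescope[where f = "\<lambda>r. ln (b + real r)"]) (simp add: ln_div)
  also have "\<dots> \<le> (\<Sum>r<T. 1 / (b + real r))"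
  proof (intro sum_mono)
    fix r assume "r \<in> {..<T}"
    have "ln (b + real r + 1) - ln (b + real r) \<le> 1 / (b + real r)"
      using assms by (intro ln_step_upper) auto
    then show "ln (b + real (Suc r)) - ln (b + real r) \<le> 1 / (b + real r)"
      by (simp add: algebra_simps)
  qed
  finally show ?thesis .
qed

lemma harm_upper:
  fixes b :: real assumes "b > 1"
  shows "(\<Sum>r<T. 1 / (b + real r)) \<le> ln ((b - 1 + T) / (b - 1))"
proof -
  have "(\<Sum>r<T. 1 / (b + real r)) \<le> (\<Sum>r<T. ln (b + real r) - ln (b + real r - 1))"
    using assms by (intro sum_mono ln_step_lower) auto
  also have "\<dots> = (\<Sum>r<T. ln (b - 1 + real (Suc r)) - ln (b - 1 + real r))"
    by (intro sum.cong refl) (simp add: algebra_simps)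
  also have "\<dots> = ln ((b - 1 + T) / (b - 1))"
    using assms by (subst sum_lessThan_telescope[where f = "\<lambda>r. ln (b - 1 + real r)"]) (simp add: ln_div)
  finally show ?thesis .
qed

lemma H_bounds:
  fixes q L :: real and T :: nat
  assumes L1: "L \<ge> 1" and qL: "q \<ge> L" and T2: "T \<ge> 2"
  defines "H \<equiv> (\<Sum>r<T. 1/(q*T + 1 - L + real r))"
  shows "ln((q+1)/q) \<le> H" "T*(H - ln((q+1)/q)) \<le> 2" "0 \<le> H" "H \<le> 2"
proof -
  define b where "b = q*T + 1 - L"
  have T2': "real T \<ge> 2" using T2 by simp
  have qT: "q*T \<ge> 2*q" using mult_left_mono[OF T2', of q] qL L1 by (simp add: mult.commute)
  have bm1: "b - 1 = q*T - L" unfolding b_def by simp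
  have bm1_ge: "q*T - L \<ge> q*T/2" using qT qL by simp
  have b1: "b > 1" using bm1 bm1_ge qT qL L1 by linarith
  have Hb: "H = (\<Sum>r<T. 1/(b + real r))" unfolding H_def b_def by simp
  have low: "ln ((b + T) / b) \<le> H" unfolding Hb using b1 by (intro harm_lower) auto
  have up: "H \<le> ln ((b - 1 + T) / (b - 1))" unfolding Hb using b1 by (intro harm_upper) auto
  have qpos: "q > 0" using qL L1 by simp
  have "(q+1)/q \<le> (b+T)/b"
  proof -
    have "b \<le> q*T" unfolding b_def using L1 by simp
    then have "(q+1) * b \<le> q * (b + T)" by (simp add: algebra_simps)
    then show ?thesis using qpos b1 by (simp add: divide_simps mult.commute)
  qed
  then have "ln((q+1)/q) \<le> ln((b+T)/b)" using qpos b1 by (subst ln_le_cancel_iff) auto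
  then show lamH: "ln((q+1)/q) \<le> H" using low by simp
  have X: "ln ((b - 1 + T) / (b - 1)) - ln((q+1)/q) = ln (((b - 1 + T) / (b - 1)) / ((q+1)/q))"
    using b1 qpos by (simp add: ln_div ln_mult)
  also have "\<dots> \<le> ((b - 1 + T) / (b - 1)) / ((q+1)/q) - 1"
    using b1 qpos T2' by (intro ln_le_minus_one) (auto intro!: divide_pos_pos)
  also have "((b - 1 + T) / (b - 1)) / ((q+1)/q) - 1 = L / ((q*T - L) * (q+1))"
  proof -
    have pos: "q*T - L > 0" using bm1 b1 by simp
    then have "(q*T - L) * (q+1) \<noteq> 0" using qpos by simp
    then show ?thesis using pos qpos unfolding bm1 by (simp add: field_simps)
  qed
  finally have d1: "H - ln((q+1)/q) \<le> L / ((q*T - L) * (q+1))" using up by simp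
  have "T * L \<le> 2 * ((q*T - L) * (q+1))"
  proof -
    have "2 * ((q*T - L) * (q+1)) \<ge> (q*T) * (q+1)"
    proof -
      have "q*T \<le> 2 * (q*T - L)" using bm1_ge by (smt (verit) field_sum_of_halves)
      then have "(q*T) * (q+1) \<le> (2 * (q*T - L)) * (q+1)" using qpos by (intro mult_right_mono) auto
      then show ?thesis by (simp add: algebra_simps)
    qed
    moreover have "(q*T) * (q+1) \<ge> T * L"
    proof -
      have "q * 1 \<le> q * (q+1)" using qpos by (intro mult_left_mono) auto
      then have "L \<le> q * (q+1)" using qL by simp
      then have "T * L \<le> T * (q * (q+1))" by (intro mult_left_mono) auto
      then show ?thesis by (simp add: algebra_simps)
    qed
    ultimately show ?thesis by linarith
  qed
  then have "T * (L / ((q*T - L) * (q+1))) \<le> 2"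
    using bm1 b1 qpos by (simp add: divide_simps mult_pos_pos)
  moreover have "T * (H - ln((q+1)/q)) \<le> T * (L / ((q*T - L) * (q+1)))"
    using d1 by (intro mult_left_mono) auto
  ultimately show "T*(H - ln((q+1)/q)) \<le> 2" by linarith
  show "0 \<le> H" unfolding Hb using b1 by (intro sum_nonneg) auto
  have "ln ((b - 1 + T) / (b - 1)) \<le> (b - 1 + T) / (b - 1) - 1"
    using b1 T2' by (intro ln_le_minus_one) auto
  also have "\<dots> = T / (b - 1)" using b1 by (simp add: field_simps)
  also have "\<dots> = T / (q*T - L)" unfolding bm1 ..
  also have "\<dots> \<le> 2"
  proof -
    have "1 * real T \<le> q * T" using qL L1 by (intro mult_right_mono) auto
    moreover have "q*T \<le> 2 * (q*T - L)" using bm1_ge by (smt (verit) field_sum_of_halves)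
    ultimately have "T \<le> 2 * (q*T - L)" by linarith
    moreover have "q*T - L > 0" using bm1 b1 by simp
    ultimately show ?thesis by (simp add: pos_divide_le_eq)
  qed
  finally show "H \<le> 2" using up by simp
qed

lemma group_bound:
  fixes a c \<beta> q L :: real and T :: nat
  assumes L1: "L \<ge> 1" and qL: "q \<ge> L" and T2: "T \<ge> 2"
  shows "\<bar>(\<Sum>r<T. ((a*T - a) + T*c + \<beta>*(real r + 1)) / (q*T + real r + 1 - L))
           - T*((a + c - \<beta>*q) * ln((q+1)/q) + \<beta>)\<bar> \<le> 2*\<bar>a + c - \<beta>*q\<bar> + 2*\<bar>\<beta>*L - a\<bar>"
proof -
  define H where "H = (\<Sum>r<T. 1/(q*T + 1 - L + real r))"
  define \<gamma> where "\<gamma> = a + c - \<beta>*q"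
  define \<delta> where "\<delta> = \<beta>*L - a"
  define lam where "lam = ln((q+1)/q)"
  note HB = H_bounds[OF L1 qL T2, folded H_def, folded lam_def]
  have T2': "real T \<ge> 2" using T2 by simp
  have qT: "q*T \<ge> 2*q" using mult_left_mono[OF T2', of q] qL L1 by (simp add: mult.commute)
  have "(\<Sum>r<T. ((a*T - a) + T*c + \<beta>*(real r + 1)) / (q*T + real r + 1 - L))
      = (\<Sum>r<T. \<beta> + (T*\<gamma> + \<delta>) * (1/(q*T + 1 - L + real r)))"
  proof (intro sum.cong refl)
    fix r assume "r \<in> {..<T}"
    have pos: "q*T + real r + 1 - L > 0" using qT qL L1 of_nat_0_le_iff[of r] by linarith
    have "(a*T - a) + T*c + \<beta>*(real r + 1) = \<beta> * (q*T + real r + 1 - L) + (T*\<gamma> + \<delta>)"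
      unfolding \<gamma>_def \<delta>_def by (simp add: algebra_simps)
    then show "((a*T - a) + T*c + \<beta>*(real r + 1)) / (q*T + real r + 1 - L)
        = \<beta> + (T*\<gamma> + \<delta>) * (1/(q*T + 1 - L + real r))"
      using pos by (simp add: field_simps)
  qed
  also have "\<dots> = T*\<beta> + (T*\<gamma> + \<delta>) * H"
    unfolding H_def by (simp add: sum.distrib sum_distrib_left)
  finally have eq: "(\<Sum>r<T. ((a*T - a) + T*c + \<beta>*(real r + 1)) / (q*T + real r + 1 - L))
      - T*(\<gamma> * lam + \<beta>) = \<gamma> * (T*(H - lam)) + \<delta> * H"
    by (simp add: algebra_simps)
  have "\<bar>\<gamma> * (T*(H - lam))\<bar> \<le> \<bar>\<gamma>\<bar> * 2"
    unfolding abs_mult using HB by (intro mult_left_mono) auto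
  moreover have "\<bar>\<delta> * H\<bar> \<le> \<bar>\<delta>\<bar> * 2"
    unfolding abs_mult using HB by (intro mult_left_mono) auto
  ultimately have "\<bar>\<gamma> * (T*(H - lam)) + \<delta> * H\<bar> \<le> 2*\<bar>\<gamma>\<bar> + 2*\<bar>\<delta>\<bar>" by linarith
  then show ?thesis using eq unfolding \<gamma>_def \<delta>_def lam_def by simp
qed



definition sfun :: "nat \<Rightarrow> nat \<Rightarrow> nat \<Rightarrow> real" where
  "sfun p d m = real (Ncount p d m) / (real m + 1 - 10^(p-1))"

definition beta :: "nat \<Rightarrow> nat \<Rightarrow> real" where
  "beta d q = of_bool (q mod 10 = d)"

definition cq :: "nat \<Rightarrow> nat \<Rightarrow> nat \<Rightarrow> real" where
  "cq p d q = real (q div 10 - 10^(p-2)) + of_bool (d < q mod 10)"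

definition gam :: "nat \<Rightarrow> nat \<Rightarrow> nat \<Rightarrow> real" where
  "gam p d q = 10^(p-2) + cq p d q - beta d q * real q"

definition Ctot :: "nat \<Rightarrow> nat \<Rightarrow> real" where
  "Ctot p d = (\<Sum>q\<in>{10^(p-1)..<10^p}. gam p d q * ln ((real q + 1) / real q) + beta d q)"

definition Kc :: "nat \<Rightarrow> nat \<Rightarrow> real" where
  "Kc p d = (\<Sum>q\<in>{10^(p-1)..<10^p}. 2 * \<bar>gam p d q\<bar> + 2 * \<bar>beta d q * 10^(p-1) - 10^(p-2)\<bar>)"

definition Bsum :: "nat \<Rightarrow> nat \<Rightarrow> nat \<Rightarrow> real" where
  "Bsum p d i = (\<Sum>m\<in>{10^(p-1)*10^i..<10^p*10^i}. sfun p d m)"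

lemma Kc_nonneg: "Kc p d \<ge> 0"
  unfolding Kc_def by (intro sum_nonneg) auto

lemma block_bound:
  assumes "p \<ge> 2" "d \<le> 9" "i \<ge> 1"
  shows "\<bar>Bsum p d i - 10^i * Ctot p d\<bar> \<le> Kc p d"
proof -
  have T2: "(10::nat)^i \<ge> 2"
  proof -
    have "(10::nat)^1 \<le> 10^i" using assms(3) by (intro power_increasing) auto
    then show ?thesis by simp
  qed
  have "Bsum p d i = (\<Sum>q\<in>{10^(p-1)..<10^p}. \<Sum>r<10^i. sfun p d (q*10^i + r))"
    unfolding Bsum_def by (rule sum_blocks) simp
  also have "\<dots> = (\<Sum>q\<in>{10^(p-1)..<10^p}. \<Sum>r<10^i.
      ((10^(p-2)*real (10^i) - 10^(p-2)) + real (10^i) * cq p d q + beta d q * (real r + 1))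
        / (real q * real (10^i) + real r + 1 - 10^(p-1)))"
  proof (intro sum.cong refl)
    fix q r :: nat assume q: "q \<in> {10^(p-1)..<10^p}" and r: "r \<in> {..<(10::nat)^i}"
    show "sfun p d (q*10^i + r) = ((10^(p-2)*real (10^i) - 10^(p-2)) + real (10^i) * cq p d q + beta d q * (real r + 1))
        / (real q * real (10^i) + real r + 1 - 10^(p-1))"
      unfolding sfun_def using Ncount_block[OF assms(1,2), of q r i] q r
      by (simp add: cq_def beta_def)
  qed
  finally have Beq: "Bsum p d i = \<dots>" .
  have "10^i * Ctot p d = (\<Sum>q\<in>{10^(p-1)..<10^p}. real (10^i) * ((10^(p-2) + cq p d q - beta d q * real q) * ln ((real q + 1) / real q) + beta d q))"
    unfolding Ctot_def gam_def by (simp add: sum_distrib_left)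
  then have "Bsum p d i - 10^i * Ctot p d = (\<Sum>q\<in>{10^(p-1)..<10^p}.
      (\<Sum>r<10^i. ((10^(p-2)*real (10^i) - 10^(p-2)) + real (10^i) * cq p d q + beta d q * (real r + 1))
        / (real q * real (10^i) + real r + 1 - 10^(p-1)))
      - real (10^i) * ((10^(p-2) + cq p d q - beta d q * real q) * ln ((real q + 1) / real q) + beta d q))"
    using Beq by (simp add: sum_subtractf)
  also have "\<bar>\<dots>\<bar> \<le> Kc p d"
    unfolding Kc_def gam_def
  proof (rule order.trans[OF sum_abs], intro sum_mono)
    fix q :: nat assume q: "q \<in> {10^(p-1)..<(10::nat)^p}"
    have L1: "(10::real)^(p-1) \<ge> 1" by simp
    have qL: "real q \<ge> 10^(p-1)" using q by (simp add: of_nat_le_iff[symmetric])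
    show "\<bar>(\<Sum>r<10^i. ((10^(p-2)*real (10^i) - 10^(p-2)) + real (10^i) * cq p d q + beta d q * (real r + 1))
        / (real q * real (10^i) + real r + 1 - 10^(p-1)))
      - real (10^i) * ((10^(p-2) + cq p d q - beta d q * real q) * ln ((real q + 1) / real q) + beta d q)\<bar>
      \<le> 2 * \<bar>10^(p-2) + cq p d q - beta d q * real q\<bar> + 2 * \<bar>beta d q * 10^(p-1) - 10^(p-2)\<bar>"
      by (rule group_bound[OF L1 qL T2])
  qed
  finally show ?thesis .
qed

lemma total_sum:
  assumes "p \<ge> 2"
  shows "(\<Sum>m\<in>{10^(p-1)..<10^(p-1)*10^j}. sfun p d m) = (\<Sum>i<j. Bsum p d i)"
proof (induction j)
  case 0
  then show ?case by simp
next
  case (Suc i)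
  have L: "(10::nat)^p = 10 * 10^(p-1)" using pow_split[OF assms(1)] by auto
  have le1: "(10::nat)^(p-1) \<le> 10^(p-1)*10^i" by simp
  have le2: "(10::nat)^(p-1)*10^i \<le> 10^(p-1)*10^Suc i" by simp
  have e: "(10::nat)^(p-1)*10^Suc i = 10^p*10^i" using L by simp
  have "(\<Sum>m\<in>{10^(p-1)..<10^(p-1)*10^Suc i}. sfun p d m)
     = (\<Sum>m\<in>{10^(p-1)..<10^(p-1)*10^i}. sfun p d m) + (\<Sum>m\<in>{10^(p-1)*10^i..<10^p*10^i}. sfun p d m)"
    unfolding e[symmetric] by (rule sum.atLeastLessThan_concat[OF le1 le2, symmetric])
  then show ?case using Suc.IH by (simp add: Bsum_def)
qed

lemma Pprob_eq:
  assumes "p \<ge> 2"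
  shows "Pprob d (10^(j+(p-1)) - 1) p = (\<Sum>i<j. Bsum p d i) / (10^(p-1)*10^j - 10^(p-1))"
proof -
  have pos: "(10::nat)^(j+(p-1)) > 0" by simp
  have r: "real (10^(j+(p-1)) - 1) + 1 = 10^(p-1)*10^j"
    using pos by (simp add: of_nat_diff power_add mult.commute)
  have set: "{10^(p-1)..10^(j+(p-1)) - 1} = {10^(p-1)..<10^(p-1)*(10::nat)^j}"
  proof -
    have "{10^(p-1)..10^(j+(p-1)) - 1} = {10^(p-1)..<Suc (10^(j+(p-1)) - 1)}"
      by (rule atLeastLessThanSuc_atLeastAtMost[symmetric])
    also have "Suc (10^(j+(p-1)) - 1) = 10^(p-1)*(10::nat)^j"
      using pos by (simp add: power_add mult.commute)
    finally show ?thesis .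
  qed
  show ?thesis
    unfolding Pprob_def r set total_sum[OF assms, symmetric] sfun_def
    by simp
qed

lemma geom10: "(\<Sum>i<j. (10::real)^i) = (10^j - 1) / 9"
  by (induction j) (simp_all add: field_simps)

lemma main_limit:
  assumes "p \<ge> 2" "d \<le> 9"
  shows "(\<lambda>n. Pprob d (10^n - 1) p) \<longlonglongrightarrow> Ctot p d / (9*10^(p-1))"
proof (rule LIMSEQ_offset[where k = "p-1"])
  define L :: real where "L = 10^(p-1)"
  define C where "C = Ctot p d"
  define e where "e i = Bsum p d i - 10^i * C" for i
  define E0 where "E0 = \<bar>e 0\<bar>"
  define K where "K = Kc p d"
  have L1: "L \<ge> 1" unfolding L_def by simp
  have K0: "K \<ge> 0" unfolding K_def by (rule Kc_nonneg)
  have E00: "E0 \<ge> 0" unfolding E0_def by simp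
  have ebound: "\<bar>e i\<bar> \<le> K" if "i \<ge> 1" for i
    unfolding e_def K_def C_def using block_bound[OF assms that] .
  have sumb: "(\<Sum>i<j. \<bar>e i\<bar>) \<le> (E0 + K) * j" for j
  proof (induction j)
    case 0 then show ?case by simp
  next
    case (Suc j)
    show ?case
    proof (cases "j = 0")
      case True then show ?thesis using K0 by (simp add: E0_def)
    next
      case False
      then have "\<bar>e j\<bar> \<le> K" using ebound by simp
      then show ?thesis using Suc.IH E00 by (simp add: algebra_simps)
    qed
  qed
  have bnd: "\<bar>Pprob d (10^(j+(p-1)) - 1) p - C / (9*L)\<bar> \<le> 2*(E0+K) * (real j / 10^j)" if j1: "j \<ge> 1" for j
  proof -
    have t10: "(10::real)^j \<ge> 10"
    proof -
      have "(10::real)^1 \<le> 10^j" using j1 by (intro power_increasing) auto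
      then show ?thesis by simp
    qed
    have den: "L*10^j - L = L * (10^j - 1)" by (simp add: algebra_simps)
    have denpos: "L * (10^j - 1) > 0" using L1 t10 by simp
    have sumB: "(\<Sum>i<j. Bsum p d i) = (\<Sum>i<j. e i) + C * ((10^j - 1)/9)"
      unfolding e_def by (simp add: sum_subtractf sum_distrib_left[symmetric] geom10 mult.commute)
    have "Pprob d (10^(j+(p-1)) - 1) p - C / (9*L) = (\<Sum>i<j. e i) / (L * (10^j - 1))"
      unfolding Pprob_eq[OF assms(1)] L_def[symmetric] den sumB using denpos L1
      by (simp add: field_simps)
    then have "\<bar>Pprob d (10^(j+(p-1)) - 1) p - C / (9*L)\<bar> = \<bar>\<Sum>i<j. e i\<bar> / (L * (10^j - 1))"
      using denpos by simp
    also have "\<dots> \<le> ((E0 + K) * j) / (L * (10^j - 1))"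
      using denpos sumb[of j] order.trans[OF sum_abs] by (intro divide_right_mono) auto
    also have "\<dots> \<le> ((E0 + K) * j) / (10^j / 2)"
    proof (rule divide_left_mono)
      have "(10::real)^j / 2 \<le> 1 * (10^j - 1)" using t10 by simp
      also have "\<dots> \<le> L * (10^j - 1)" using L1 t10 by (intro mult_right_mono) auto
      finally show "10^j / 2 \<le> L * (10^j - 1)" .
    qed (use E00 K0 denpos in auto)
    also have "\<dots> = 2*(E0+K) * (real j / 10^j)" by simp
    finally show ?thesis .
  qed
  have lim0: "(\<lambda>j. 2*(E0+K) * (real j / 10^j)) \<longlonglongrightarrow> 0"
    using tendsto_mult_right_zero[OF lim_n_over_pown[of "10::real"]] by simp
  have lo: "(\<lambda>j. C/(9*L) - 2*(E0+K) * (real j / 10^j)) \<longlonglongrightarrow> C/(9*L)"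
    using tendsto_diff[OF tendsto_const lim0] by simp
  have hi: "(\<lambda>j. C/(9*L) + 2*(E0+K) * (real j / 10^j)) \<longlonglongrightarrow> C/(9*L)"
    using tendsto_add[OF tendsto_const lim0] by simp
  have ev: "eventually (\<lambda>j. j \<ge> 1) sequentially" by (rule eventually_ge_at_top)
  have "(\<lambda>j. Pprob d (10^(j+(p-1)) - 1) p) \<longlonglongrightarrow> C/(9*L)"
  proof (rule tendsto_sandwich[OF _ _ lo hi])
    show "eventually (\<lambda>j. C/(9*L) - 2*(E0+K) * (real j / 10^j) \<le> Pprob d (10^(j+(p-1)) - 1) p) sequentially"
      using ev proof eventually_elim
      case (elim j)
      show ?case using bnd[OF elim] unfolding abs_le_iff by linarith
    qed
    show "eventually (\<lambda>j. Pprob d (10^(j+(p-1)) - 1) p \<le> C/(9*L) + 2*(E0+K) * (real j / 10^j)) sequentially"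
      using ev proof eventually_elim
      case (elim j)
      show ?case using bnd[OF elim] unfolding abs_le_iff by linarith
    qed
  qed
  then show "(\<lambda>j. Pprob d (10^(j+(p-1)) - 1) p) \<longlonglongrightarrow> Ctot p d / (9*10^(p-1))"
    unfolding C_def L_def .
qed



declare sum_of_bool_eq[simp del]

lemma sum_gt_tele:
  fixes f :: "nat \<Rightarrow> real"
  assumes "d < n"
  shows "(\<Sum>e<n. of_bool (d < e) * (f (Suc e) - f e)) = f n - f (Suc d)"
  using assms
proof (induction n)
  case 0 then show ?case by simp
next
  case (Suc n)
  show ?case
  proof (cases "d = n")
    case True
    then have "(\<Sum>e<n. of_bool (d < e) * (f (Suc e) - f e)) = 0"
      by (intro sum.neutral) auto
    then show ?thesis using True by simp
  next
    case False
    then have "d < n" using Suc.prems by simp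
    then show ?thesis using Suc.IH by simp
  qed
qed

definition Fg :: "nat \<Rightarrow> nat \<Rightarrow> nat \<Rightarrow> real" where
  "Fg a d M = (\<Sum>q\<in>{10*a..<10*M}. (real a + (real (q div 10 - a) + of_bool (d < q mod 10))
      - of_bool (q mod 10 = d) * real q) * ln ((real q + 1) / real q) + of_bool (q mod 10 = d))"

lemma Fg_step_block:
  fixes a d M :: nat
  assumes "a \<le> M" "a \<ge> 1" "d \<le> 9"
  shows "(\<Sum>q\<in>{10*M..<10*M+10}. (real a + (real (q div 10 - a) + of_bool (d < q mod 10))
      - of_bool (q mod 10 = d) * real q) * ln ((real q + 1) / real q) + of_bool (q mod 10 = d))
   = real M * (ln (10*real M + 10) - ln (10*real M)) + (ln (10*real M + 10) - ln (10*real M + d + 1))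
     - (10*real M + d) * (ln (10*real M + d + 1) - ln (10*real M + d)) + 1"
proof -
  let ?f = "\<lambda>e::nat. ln (10*real M + real e)"
  have one: "(\<Sum>e<10::nat. of_bool (e = d) :: real) = 1"
    using assms by (simp add: of_bool_def sum.delta)
  have Mpos: "real M \<ge> 1" using assms by simp
  have "(\<Sum>q\<in>{10*M..<10*M+10}. (real a + (real (q div 10 - a) + of_bool (d < q mod 10))
      - of_bool (q mod 10 = d) * real q) * ln ((real q + 1) / real q) + of_bool (q mod 10 = d))
    = (\<Sum>e<10. (real a + (real ((10*M+e) div 10 - a) + of_bool (d < (10*M+e) mod 10))
      - of_bool ((10*M+e) mod 10 = d) * real (10*M+e)) * ln ((real (10*M+e) + 1) / real (10*M+e)) + of_bool ((10*M+e) mod 10 = d))"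
    by (simp add: sum.atLeastLessThan_shift_0 add.commute atLeast0LessThan)
  also have "\<dots> = (\<Sum>e<10. real M * (?f (Suc e) - ?f e) + of_bool (d < e) * (?f (Suc e) - ?f e)
      - of_bool (e = d) * ((10 * real M + real d) * (?f (Suc d) - ?f d)) + of_bool (e = d))"
  proof (intro sum.cong refl)
    fix e assume e: "e \<in> {..<(10::nat)}"
    then have dm: "(10*M+e) div 10 = M" "(10*M+e) mod 10 = e" by auto
    have lnq: "ln ((real (10*M+e) + 1) / real (10*M+e)) = ?f (Suc e) - ?f e"
      using Mpos by (subst ln_div) (auto simp: add.assoc)
    show "(real a + (real ((10*M+e) div 10 - a) + of_bool (d < (10*M+e) mod 10))
      - of_bool ((10*M+e) mod 10 = d) * real (10*M+e)) * ln ((real (10*M+e) + 1) / real (10*M+e)) + of_bool ((10*M+e) mod 10 = d)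
      = real M * (?f (Suc e) - ?f e) + of_bool (d < e) * (?f (Suc e) - ?f e)
      - of_bool (e = d) * ((10 * real M + real d) * (?f (Suc d) - ?f d)) + of_bool (e = d)"
      unfolding dm lnq using assms by (cases "e = d") (simp_all add: of_nat_diff algebra_simps)
  qed
  also have "\<dots> = (\<Sum>e<10. real M * (?f (Suc e) - ?f e)) + (\<Sum>e<10. of_bool (d < e) * (?f (Suc e) - ?f e))
      - (\<Sum>e<10. of_bool (e = d) * ((10 * real M + real d) * (?f (Suc d) - ?f d))) + (\<Sum>e<10. of_bool (e = d))"
    by (simp only: sum.distrib sum_subtractf)
  also have "(\<Sum>e<10. real M * (?f (Suc e) - ?f e)) = real M * (\<Sum>e<10. ?f (Suc e) - ?f e)"
    by (rule sum_distrib_left[symmetric])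
  also have "(\<Sum>e<10. ?f (Suc e) - ?f e) = ?f 10 - ?f 0" by (rule sum_lessThan_telescope)
  also have "(\<Sum>e<10. of_bool (d < e) * (?f (Suc e) - ?f e)) = ?f 10 - ?f (Suc d)"
    using assms by (intro sum_gt_tele) auto
  also have "(\<Sum>e<10. of_bool (e = d) * ((10 * real M + real d) * (?f (Suc d) - ?f d)))
      = (10 * real M + real d) * (?f (Suc d) - ?f d)"
    using one by (simp only: sum_distrib_right[symmetric])
  also note one
  finally show ?thesis by (simp add: add.assoc add.commute)
qed

lemma Fg_raw:
  fixes a d M :: nat
  assumes "a \<ge> 1" "d \<le> 9" "a \<le> M"
  shows "Fg a d M = real a * (ln (real M) - ln (real a)) + (real M - real a) * ln (10 * real M)
     - (\<Sum>j\<in>{a..<M}. ln (10 * real j + real d + 1))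
     - 10 * (\<Sum>j\<in>{a..<M}. real j * (ln (10 * real j + real d + 1) - ln (10 * real j + real d)))
     - real d * (\<Sum>j\<in>{a..<M}. ln (10 * real j + real d + 1) - ln (10 * real j + real d))
     + (real M - real a)"
  using assms(3)
proof (induction M)
  case 0 then show ?case using assms by simp
next
  case (Suc M)
  show ?case
  proof (cases "a = Suc M")
    case True
    then show ?thesis by (simp add: Fg_def)
  next
    case False
    then have aM: "a \<le> M" using Suc.prems by simp
    have Mpos: "real M \<ge> 1" using aM assms by simp
    have le1: "10*a \<le> 10*M" "10*M \<le> 10*M+10" using aM by auto
    have "Fg a d (Suc M) = Fg a d M + (\<Sum>q\<in>{10*M..<10*M+10}. (real a + (real (q div 10 - a) + of_bool (d < q mod 10))
      - of_bool (q mod 10 = d) * real q) * ln ((real q + 1) / real q) + of_bool (q mod 10 = d))"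
    proof -
      have e: "10 * Suc M = 10*M + 10" by simp
      show ?thesis unfolding Fg_def e by (rule sum.atLeastLessThan_concat[OF le1, symmetric])
    qed
    also note Fg_step_block[OF aM assms(1,2)]
    also note Suc.IH[OF aM]
    finally have eq: "Fg a d (Suc M) = real a * (ln (real M) - ln (real a)) + (real M - real a) * ln (10 * real M)
     - (\<Sum>j\<in>{a..<M}. ln (10 * real j + real d + 1))
     - 10 * (\<Sum>j\<in>{a..<M}. real j * (ln (10 * real j + real d + 1) - ln (10 * real j + real d)))
     - real d * (\<Sum>j\<in>{a..<M}. ln (10 * real j + real d + 1) - ln (10 * real j + real d))
     + (real M - real a) + (real M * (ln (10*real M + 10) - ln (10*real M)) + (ln (10*real M + 10) - ln (10*real M + d + 1))
     - (10*real M + d) * (ln (10*real M + d + 1) - ln (10*real M + d)) + 1)" .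
    have l1: "ln (10*real M + 10) = ln 10 + ln (real M + 1)"
    proof -
      have "ln (10 * (real M + 1)) = ln 10 + ln (real M + 1)" using Mpos by (intro ln_mult_pos) auto
      then show ?thesis by (simp add: algebra_simps)
    qed
    have l2: "ln (10*real M) = ln 10 + ln (real M)"
      using Mpos by (subst ln_mult_pos) auto
    have l3: "ln (10 * real (Suc M)) = ln 10 + ln (real M + 1)"
      using l1 by (simp add: algebra_simps)
    have l4: "ln (real (Suc M)) = ln (real M + 1)" by simp
    show ?thesis unfolding eq l1 l2 l3 l4 using aM
      by (simp add: algebra_simps)
  qed
qed

lemma nml:
  fixes a d N :: nat
  assumes "a \<le> N"
  shows "(\<Sum>j\<in>{a..<N}. real j * (ln (10 * real j + 10 + real d) - ln (10 * real j + real d + 1)))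
     + (\<Sum>j\<in>{a..<N}. ln (10 * real j + 10 + real d) - ln (10 * real j + real d + 1))
     + (\<Sum>j\<in>{a..<Suc N}. real j * (ln (10 * real j + real d + 1) - ln (10 * real j + real d)))
     = (real N + 1) * ln (10 * real N + real d + 1) - real a * ln (10 * real a + real d)
       - (\<Sum>j\<in>{a..<Suc N}. ln (10 * real j + real d + 1))"
  using assms
proof (induction N)
  case 0 then show ?case by simp
next
  case (Suc N)
  show ?case
  proof (cases "a = Suc N")
    case True
    then show ?thesis by (simp add: algebra_simps)
  next
    case False
    then have aN: "a \<le> N" using Suc.prems by simp
    have e1: "10 * real (Suc N) + real d = 10 * real N + 10 + real d" by simp
    have e2: "10 * real (Suc N) + real d + 1 = 10 * real N + 10 + real d + 1" by simp
    show ?thesis using Suc.IH[OF aN] aN unfolding e1 e2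
      by (simp add: algebra_simps)
  qed
qed



lemma Ctot_Fg:
  assumes "p \<ge> 2"
  shows "Ctot p d = Fg (10^(p-2)) d (10^(p-1))"
proof -
  have L: "(10::nat)^(p-1) = 10 * 10^(p-2)" "(10::nat)^p = 10 * 10^(p-1)"
    using pow_split[OF assms(1)] by auto
  show ?thesis unfolding Ctot_def Fg_def gam_def cq_def beta_def L(2) L(1)[symmetric]
    by simp
qed

lemma closed_form:
  assumes "p \<ge> 2" "d \<le> 9"
  shows "Ctot p d / (9*10^(p-1)) =
    1 / 10 + (ndp d p + mdp d p - 9 * ldp d p - real d * kdp d p) / (9 * 10 ^ (p - 1))
    + 1 / 90 * ln ((10 ^ (p - 1) + real d) / 10 ^ (p - 1))
    + 1 / 9 * ln (10 ^ p / (10 ^ p - 10 + real d + 1))"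
proof -
  define a :: nat where "a = 10^(p-2)"
  define L :: nat where "L = 10^(p-1)"
  have La: "L = 10 * a" unfolding L_def a_def using pow_split[OF assms(1)] by auto
  have a1: "a \<ge> 1" unfolding a_def by simp
  have Lr: "(10::real)^(p-1) = 10 * real a" "(10::real)^p = 100 * real a"
    using pow_split[OF assms(1), where 'a=real] unfolding a_def by auto
  have aL: "a \<le> L" using La by simp
  have jpos: "10 * real j + real d > 0" if "j \<ge> a" for j using that a1 by simp
  define S where "S = (\<Sum>j\<in>{a..<L}. ln (10 * real j + real d + 1))"
  define l where "l = (\<Sum>j\<in>{a..<L}. real j * (ln (10 * real j + real d + 1) - ln (10 * real j + real d)))"
  define k where "k = (\<Sum>j\<in>{a..<L}. ln (10 * real j + real d + 1) - ln (10 * real j + real d))"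
  define n where "n = (\<Sum>j\<in>{a..<L-1}. real j * (ln (10 * real j + 10 + real d) - ln (10 * real j + real d + 1)))"
  define m where "m = (\<Sum>j\<in>{a..<L-1}. ln (10 * real j + 10 + real d) - ln (10 * real j + real d + 1))"
  have set1: "{10^(p-2)..10^(p-1) - 1} = {a..<L}"
    unfolding a_def[symmetric] L_def[symmetric] using La a1 by auto
  have set2: "{10^(p-2)..10^(p-1) - 2} = {a..<L-1}"
    unfolding a_def[symmetric] L_def[symmetric] using La a1 by auto
  have kk: "kdp d p = k" unfolding kdp_def k_def set1
    by (intro sum.cong refl) (use jpos in \<open>auto simp: ln_div add.assoc\<close>)
  have ll: "ldp d p = l" unfolding ldp_def l_def set1
    by (intro sum.cong refl) (use jpos in \<open>auto simp: ln_div add.assoc\<close>)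
  have mm: "mdp d p = m" unfolding mdp_def m_def set2
    by (intro sum.cong refl) (use jpos in \<open>auto simp: ln_div algebra_simps\<close>)
  have nn: "ndp d p = n" unfolding ndp_def n_def set2
    by (intro sum.cong refl) (use jpos in \<open>auto simp: ln_div algebra_simps\<close>)
  have C: "Ctot p d = real a * (ln (real L) - ln (real a)) + (real L - real a) * ln (10 * real L)
     - S - 10 * l - real d * k + (real L - real a)"
    unfolding Ctot_Fg[OF assms(1)] a_def[symmetric] L_def[symmetric] S_def l_def k_def
    by (rule Fg_raw[OF a1 assms(2) aL])
  have N: "n + m + l = real L * ln (10 * real L - 9 + real d) - real a * ln (10 * real a + real d) - S"
  proof -
    have aN: "a \<le> L - 1" using La a1 by simp
    have s: "Suc (L - 1) = L" using La a1 by simp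
    have r: "real (L - 1) = real L - 1" using La a1 by (simp add: of_nat_diff)
    have "10 * (real L - 1) + real d + 1 = 10 * real L - 9 + real d" by simp
    then show ?thesis using nml[OF aN, of d] unfolding s r n_def m_def l_def S_def by (simp add: algebra_simps)
  qed
  have lnL: "ln (real L) = ln 10 + ln (real a)" unfolding La using a1 by (simp add: ln_mult_pos del: ln_mult)
  have Lpos: "real L > 0" using La a1 by simp
  have ln10L: "ln (10 * real L) = ln 10 + ln (real L)" using Lpos by (intro ln_mult_pos) auto
  have q1: "ln ((real L + real d) / real L) = ln (10 * real a + real d) - ln (real L)"
    using a1 La by (simp add: ln_div)
  have q2: "ln (10 ^ p / (10 ^ p - 10 + real d + 1)) = ln (10 * real L) - ln (10 * real L - 9 + real d)"
  proof -
    have "10 * real L - 9 + real d > 0" using La a1 by simp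
    moreover have "(10::real) ^ p - 10 + real d + 1 = 10 * real L - 9 + real d" unfolding Lr La by simp
    moreover have "(10::real) ^ p = 10 * real L" unfolding Lr La by simp
    ultimately show ?thesis using La a1 by (simp add: ln_div)
  qed
  have Lr2: "(10::real)^(p-1) = real L" unfolding L_def by simp
  have N': "S = real L * ln (10 * real L - 9 + real d) - real a * ln (10 * real a + real d) - n - m - l"
    using N by simp
  have La': "real L = 10 * real a" using La by simp
  show ?thesis unfolding kk ll mm nn q2 C Lr2 unfolding q1 N' unfolding ln10L unfolding lnL unfolding La'
    using a1 by (simp add: field_simps)
qed


theorem proposition2:
  fixes p d :: nat
  assumes "p \<ge> 2" and "d \<le> 9"
  shows "(\<lambda>n. Pprob d (10 ^ n - 1) p) \<longlonglongrightarrow>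
    1 / 10 + (ndp d p + mdp d p - 9 * ldp d p - real d * kdp d p) / (9 * 10 ^ (p - 1))
    + 1 / 90 * ln ((10 ^ (p - 1) + real d) / 10 ^ (p - 1))
    + 1 / 9 * ln (10 ^ p / (10 ^ p - 10 + real d + 1))"
  using main_limit[OF assms] unfolding closed_form[OF assms] .

end
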